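(* Let $f\in C^1[0,1]$ with $f(0)=0$, $h:=f'$, and $q$ satisfying (q). For no $c<c^*$ does problem $(P_c)$ admit a solution.
   Context: Condition (q): $q\in C[0,1]$, $q>0$ on $(0,1)$, $q(0)=q(1)=0$, and $\limsup_{\varphi\to0^+}q(\varphi)/\varphi<+\infty$. For $c\in\mathbb R$, a solution of problem $(P_c)$ is a function $z\in C[0,1]\cap C^1(0,1)$ with $\dot z(\varphi)=h(\varphi)-c-q(\varphi)/z(\varphi)$ and $z(\varphi)<0$ for all $\varphi\in(0,1)$, and $z(0)=0$. A solution of $(P^{00}_c)$ is a solution of $(P_c)$ which also satisfies $z(1)=0$. $c^*$ denotes the real number such that $(P^{00}_c)$ has a solution iff $c\ge c^*$. *)

theory Defs
  imports "HOL-Analysis.Analysis"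
begin

definition cond_q :: "(real \<Rightarrow> real) \<Rightarrow> bool" where
  "cond_q q \<longleftrightarrow> continuous_on {0..1} q \<and> (\<forall>\<phi>\<in>{0<..<1}. q \<phi> > 0) \<and> q 0 = 0 \<and> q 1 = 0
     \<and> Limsup (at_right 0) (\<lambda>\<phi>. ereal (q \<phi> / \<phi>)) < \<infinity>"

definition C1_on :: "real set \<Rightarrow> (real \<Rightarrow> real) \<Rightarrow> bool" where
  "C1_on S z \<longleftrightarrow> (\<exists>z'. continuous_on S z' \<and> (\<forall>x\<in>S. (z has_real_derivative z' x) (at x)))"

definition sol_P :: "(real \<Rightarrow> real) \<Rightarrow> (real \<Rightarrow> real) \<Rightarrow> real \<Rightarrow> (real \<Rightarrow> real) \<Rightarrow> bool" where
  "sol_P h q c z \<longleftrightarrow> continuous_on {0..1} z \<and> C1_on {0<..<1} z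
     \<and> (\<forall>\<phi>\<in>{0<..<1}. (z has_real_derivative (h \<phi> - c - q \<phi> / z \<phi>)) (at \<phi>))
     \<and> (\<forall>\<phi>\<in>{0<..<1}. z \<phi> < 0) \<and> z 0 = 0"

definition sol_P00 :: "(real \<Rightarrow> real) \<Rightarrow> (real \<Rightarrow> real) \<Rightarrow> real \<Rightarrow> (real \<Rightarrow> real) \<Rightarrow> bool" where
  "sol_P00 h q c z \<longleftrightarrow> sol_P h q c z \<and> z 1 = 0"

end

theory Submission
  imports Defs
begin


lemma real_derivative_sequence:
  fixes f :: "nat \<Rightarrow> real \<Rightarrow> real"
  assumes cvs: "convex S"
      and df:  "\<And>n x. x \<in> S \<Longrightarrow> (f n has_field_derivative f' n x) (at x within S)"
      and conv: "\<And>e. 0 < e \<Longrightarrow> \<exists>N. \<forall>n x. n \<ge> N \<longrightarrow> x \<in> S \<longrightarrow> norm (f' n x - g' x) \<le> e"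
      and x: "x \<in> S" and tf: "((\<lambda>n. f n x) \<longlongrightarrow> l) sequentially"
    shows "\<exists>g. \<forall>x \<in> S. ((\<lambda>n. f n x) \<longlongrightarrow> g x) sequentially \<and>
                       (g has_field_derivative (g' x)) (at x within S)"
proof -
  show ?thesis
    unfolding has_field_derivative_def
  proof (rule has_derivative_sequence [OF cvs _ _ x])
    show "(\<lambda>n. f n x) \<longlonglongrightarrow> l"
      by (rule tf)
  next 
    have **: "\<exists>N. \<forall>n\<ge>N. \<forall>x\<in>S. \<forall>h. norm (f' n x * h - g' x * h) \<le> \<epsilon> * norm h"
      if "\<epsilon> > 0" for \<epsilon>::real 
      by (metis that left_diff_distrib mult_right_mono norm_ge_zero norm_mult conv)
    show "\<And>e. e > 0 \<Longrightarrow> \<forall>\<^sub>F n in sequentially. \<forall>x\<in>S. \<forall>h. norm (f' n x * h - g' x * h) \<le> e * norm h"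
      unfolding eventually_sequentially by (blast intro: **)
  qed (metis has_field_derivative_def df)
qed

lemma deriv_bound:
  fixes f B f' B' :: "real \<Rightarrow> real"
  assumes "aa \<le> tt" "continuous_on {aa..tt} f" "continuous_on {aa..tt} B"
    "\<And>x. aa<x \<Longrightarrow> x<tt \<Longrightarrow> (f has_real_derivative f' x) (at x)"
    "\<And>x. aa<x \<Longrightarrow> x<tt \<Longrightarrow> (B has_real_derivative B' x) (at x)"
    "\<And>x. aa<x \<Longrightarrow> x<tt \<Longrightarrow> \<bar>f' x\<bar> \<le> B' x" "f aa = 0" "B aa = 0"
  shows "\<bar>f tt\<bar> \<le> B tt"
proof -
  have 1: "(\<lambda>x. B x - f x) aa \<le> (\<lambda>x. B x - f x) tt"
    apply (rule DERIV_nonneg_imp_increasing_open[OF assms(1)])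
    subgoal for x apply (rule exI[of _ "B' x - f' x"])
      using assms(4-6)[of x] by (auto intro!: derivative_eq_intros)
    using assms(2,3) by (auto intro!: continuous_intros)
  have 2: "(\<lambda>x. B x + f x) aa \<le> (\<lambda>x. B x + f x) tt"
    apply (rule DERIV_nonneg_imp_increasing_open[OF assms(1)])
    subgoal for x apply (rule exI[of _ "B' x + f' x"])
      using assms(4-6)[of x] by (auto intro!: derivative_eq_intros)
    using assms(2,3) by (auto intro!: continuous_intros)
  show ?thesis using 1 2 assms(7,8) by auto
qed

lemma cross:
  fixes g :: "real \<Rightarrow> real"
  assumes "a \<le> b" "continuous_on {a..b} g" "g a > 0"
    "\<And>x. a<x \<Longrightarrow> x<b \<Longrightarrow> g x = 0 \<Longrightarrow> \<exists>d>0. (g has_real_derivative d) (at x)"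
  shows "\<forall>x\<in>{a..b}. g x \<ge> 0"
proof (rule ccontr)
  assume "\<not> ?thesis"
  then obtain x1 where x1: "x1 \<in> {a..b}" "g x1 < 0" by force
  define S where "S = {a..x1} \<inter> g -` {..0}"
  have cS: "closed S" unfolding S_def
    by (rule continuous_closed_preimage) (use assms(2) x1 in \<open>auto intro: continuous_on_subset\<close>)
  have x1S: "x1 \<in> S" using x1 unfolding S_def by auto
  have bS: "bdd_below S" unfolding S_def by (auto intro: bdd_belowI[of _ a])
  define t1 where "t1 = Inf S"
  have t1S: "t1 \<in> S" unfolding t1_def using closed_contains_Inf[OF _ bS cS] x1S by auto
  have t1le: "\<And>x. x \<in> S \<Longrightarrow> t1 \<le> x" unfolding t1_def using bS by (auto intro: cInf_lower)
  have t1a: "a < t1" using t1S assms(3) unfolding S_def by (cases "t1 = a") auto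
  have t1b': "t1 \<le> b" using t1S x1 t1a unfolding S_def by auto
  have pos: "\<And>x. a \<le> x \<Longrightarrow> x < t1 \<Longrightarrow> g x > 0"
  proof -
    fix x assume "a \<le> x" "x < t1"
    then have "x \<notin> S" using t1le by force
    then show "g x > 0" using \<open>a \<le> x\<close> \<open>x < t1\<close> t1S unfolding S_def by auto
  qed
  have gt1: "g t1 = 0"
  proof -
    have "g t1 \<le> 0" using t1S unfolding S_def by auto
    moreover have "\<exists>x\<ge>a. x \<le> t1 \<and> g x = 0"
      apply (rule IVT2') using \<open>g t1 \<le> 0\<close> assms(3) t1a t1b'
      by (auto intro: continuous_on_subset[OF assms(2)])
    then obtain x where "a \<le> x" "x \<le> t1" "g x = 0" by blast
    ultimately show ?thesis using pos[of x] by force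
  qed
  have t1b: "t1 < b" using t1S x1 gt1 unfolding S_def by (cases "t1 = x1") auto
  obtain d where d: "d > 0" "(g has_real_derivative d) (at t1)" using assms(4)[OF t1a t1b gt1] by blast
  obtain e where e: "e > 0" "\<And>h. h > 0 \<Longrightarrow> h < e \<Longrightarrow> g (t1 - h) < g t1"
    using DERIV_pos_inc_left[OF d(2) d(1)] by blast
  define hh where "hh = min (e/2) ((t1 - a)/2)"
  have "g (t1 - hh) < 0" using e(2)[of hh] e(1) t1a gt1 unfolding hh_def by auto
  moreover have "a \<le> t1 - hh" "hh > 0" using e(1) t1a unfolding hh_def by (auto simp: min_def field_simps)
  then have "g (t1 - hh) > 0" using pos[of "t1 - hh"] by auto
  ultimately show False by auto
qed

lemma deriv_pow_fact:
  "((\<lambda>t::real. (t-a)^(Suc k) / fact (Suc k)) has_real_derivative (x-a)^k / fact k) (at x)"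
proof -
  have d1: "((\<lambda>t::real. t-a) has_real_derivative 1) (at x)" by (auto intro!: derivative_eq_intros)
  have "((\<lambda>t::real. (t-a)^(Suc k)) has_real_derivative real (Suc k) * (x-a)^(Suc k - Suc 0) * 1) (at x)"
    using DERIV_power[OF d1, of "Suc k"] by simp
  then have "((\<lambda>t::real. (t-a)^(Suc k) / fact (Suc k)) has_real_derivative (real (Suc k) * (x-a)^k) / fact (Suc k)) (at x)"
    by (intro DERIV_cdivide) simp
  moreover have "(real (Suc k) * (x-a)^k) / fact (Suc k) = (x-a)^k / fact k"
    by (simp add: fact_Suc del: of_nat_Suc)
  ultimately show ?thesis by simp
qed

lemma int_aa: "integral {a..a} (f::real\<Rightarrow>real) = 0"
  by (simp add: integral_null)

lemma picard:
  fixes g :: "real \<Rightarrow> real \<Rightarrow> real"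
  assumes ab: "a \<le> b"
    and gc: "continuous_on ({a..b} \<times> UNIV) (\<lambda>p. g (fst p) (snd p))"
    and L: "L \<ge> 0"
    and lip: "\<And>t y1 y2. t \<in> {a..b} \<Longrightarrow> \<bar>g t y1 - g t y2\<bar> \<le> L * \<bar>y1 - y2\<bar>"
  shows "\<exists>y. y a = y0 \<and> (\<forall>t\<in>{a..b}. (y has_real_derivative g t (y t)) (at t within {a..b}))"
proof -
  have comp: "continuous_on {a..b} (\<lambda>t. g t (y t))" if "continuous_on {a..b} y" for y
  proof -
    have "continuous_on {a..b} (\<lambda>t. (t, y t))" by (intro continuous_intros that)
    from continuous_on_compose2[OF gc this] show ?thesis by auto
  qed
  obtain B where B: "\<forall>x\<in>(\<lambda>t. g t y0) ` {a..b}. norm x \<le> B"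
    using compact_imp_bounded[OF compact_continuous_image[OF comp[of "\<lambda>t. y0"] compact_Icc]]
    unfolding bounded_iff by auto
  define M where "M = max B 0"
  have M: "\<And>t. t \<in> {a..b} \<Longrightarrow> \<bar>g t y0\<bar> \<le> M" "M \<ge> 0" using B unfolding M_def by force+
  define Y where "Y = rec_nat (\<lambda>t. y0) (\<lambda>n Yn t. y0 + integral {a..t} (\<lambda>s. g s (Yn s)))"
  have Y0: "Y 0 = (\<lambda>t. y0)" and YS: "\<And>n. Y (Suc n) = (\<lambda>t. y0 + integral {a..t} (\<lambda>s. g s (Y n s)))"
    by (simp_all add: Y_def)
  have cont: "continuous_on {a..b} (Y n)" for n
  proof (induction n)
    case 0 then show ?case by (simp add: Y0)
  next
    case (Suc n)
    have "(Y (Suc n) has_real_derivative g t (Y n t)) (at t within {a..b})" if "t \<in> {a..b}" for t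
      unfolding YS using integral_has_real_derivative[OF comp[OF Suc] that]
      by (auto intro!: derivative_eq_intros)
    then show ?case using DERIV_continuous continuous_on_eq_continuous_within by blast
  qed
  have der: "(Y (Suc n) has_real_derivative g t (Y n t)) (at t within {a..b})" if "t \<in> {a..b}" for t n
    unfolding YS using integral_has_real_derivative[OF comp[OF cont] that]
    by (auto intro!: derivative_eq_intros)
  have dera: "(Y (Suc n) has_real_derivative g t (Y n t)) (at t)" if "a < t" "t < b" for t n
    using der[of t n] that at_within_Icc_at[of a t b] by auto
  have Ya: "Y n a = y0" for n by (cases n) (auto simp: Y0 YS int_aa)
  have bound: "\<forall>t\<in>{a..b}. \<bar>Y (Suc n) t - Y n t\<bar> \<le> M * L^n * ((t-a)^(Suc n) / fact (Suc n))" for n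
  proof (induction n)
    case 0
    show ?case
    proof
      fix t assume t: "t \<in> {a..b}"
      have "\<bar>(\<lambda>t. Y (Suc 0) t - Y 0 t) t\<bar> \<le> (\<lambda>t. M * (t - a)) t"
        apply (rule deriv_bound[where aa=a and f="\<lambda>t. Y (Suc 0) t - Y 0 t" and B="\<lambda>t. M * (t - a)" and f'="\<lambda>x. g x y0" and B'="\<lambda>x. M"])
        subgoal using t by simp
        subgoal using t by (intro continuous_intros continuous_on_subset[OF cont]) auto
        subgoal by (intro continuous_intros)
        subgoal for x using dera[of x 0] t by (auto simp: Y0 intro!: derivative_eq_intros)
        subgoal by (auto intro!: derivative_eq_intros)
        subgoal for x using M(1)[of x] t by auto
        by (auto simp: Ya)
      then show "\<bar>Y (Suc 0) t - Y 0 t\<bar> \<le> M * L ^ 0 * ((t - a) ^ Suc 0 / fact (Suc 0))" by simp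
    qed
  next
    case (Suc n)
    show ?case
    proof
      fix t assume t: "t \<in> {a..b}"
      have "\<bar>(\<lambda>t. Y (Suc (Suc n)) t - Y (Suc n) t) t\<bar> \<le> (\<lambda>t. M * L^(Suc n) * ((t-a)^(Suc (Suc n)) / fact (Suc (Suc n)))) t"
        apply (rule deriv_bound[where aa=a and f="\<lambda>t. Y (Suc (Suc n)) t - Y (Suc n) t" and B="\<lambda>t. M * L^(Suc n) * ((t-a)^(Suc (Suc n)) / fact (Suc (Suc n)))" and f'="\<lambda>x. g x (Y (Suc n) x) - g x (Y n x)"
              and B'="\<lambda>x. M * L^(Suc n) * ((x-a)^(Suc n) / fact (Suc n))"])
        subgoal using t by simp
        subgoal using t by (intro continuous_intros continuous_on_subset[OF cont]) auto
        subgoal by (intro continuous_intros) (auto simp del: fact_Suc)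
        subgoal for x using dera[of x "Suc n"] dera[of x n] t by (auto intro!: derivative_eq_intros)
        subgoal for x by (rule DERIV_cmult[OF deriv_pow_fact])
        subgoal for x
        proof -
          assume x: "a < x" "x < t"
          have "\<bar>g x (Y (Suc n) x) - g x (Y n x)\<bar> \<le> L * \<bar>Y (Suc n) x - Y n x\<bar>"
            using lip x t by auto
          also have "\<dots> \<le> L * (M * L^n * ((x-a)^(Suc n) / fact (Suc n)))"
          proof -
            have "x \<in> {a..b}" using x t by auto
            then have "\<bar>Y (Suc n) x - Y n x\<bar> \<le> M * L^n * ((x-a)^(Suc n) / fact (Suc n))"
              using Suc by blast
            then show ?thesis using L by (rule mult_left_mono)
          qed
          finally show ?thesis by (simp add: algebra_simps)
        qed
        by (auto simp: Ya)
      then show "\<bar>Y (Suc (Suc n)) t - Y (Suc n) t\<bar> \<le> M * L^(Suc n) * ((t-a)^(Suc (Suc n)) / fact (Suc (Suc n)))"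
        by simp
    qed
  qed
  define d where "d = (\<lambda>n t. Y (Suc n) t - Y n t)"
  define Mn where "Mn = (\<lambda>n. M * (b - a) * (inverse (fact n) * (L * (b-a))^n))"
  have dMn: "norm (d n t) \<le> Mn n" if "t \<in> {a..b}" for n t
  proof -
    have "norm (d n t) \<le> M * L^n * ((t-a)^(Suc n) / fact (Suc n))"
      using bound[of n] that unfolding d_def by auto
    also have "\<dots> \<le> M * L^n * ((b-a)^(Suc n) / fact (Suc n))"
    proof -
      have "(t-a)^(Suc n) \<le> (b-a)^(Suc n)" using that by (intro power_mono) auto
      then show ?thesis using M(2) L by (intro mult_left_mono divide_right_mono) auto
    qed
    also have "\<dots> \<le> M * L^n * ((b-a)^(Suc n) / fact n)"
      using that M(2) L ab by (auto intro!: mult_left_mono divide_left_mono fact_mono)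
    also have "\<dots> = Mn n" unfolding Mn_def by (simp add: power_mult_distrib divide_inverse)
    finally show ?thesis .
  qed
  have sMn: "summable Mn" unfolding Mn_def by (intro summable_mult summable_exp)
  have ul: "uniform_limit {a..b} (\<lambda>n x. \<Sum>i<n. d i x) (\<lambda>x. suminf (\<lambda>i. d i x)) sequentially"
    by (rule Weierstrass_m_test[OF dMn sMn])
  have sumd: "(\<Sum>i<n. d i x) = Y n x - y0" for n x
    unfolding d_def using sum_lessThan_telescope[of "\<lambda>i. Y i x" n] by (simp add: Y0)
  define Yl where "Yl = (\<lambda>x. y0 + suminf (\<lambda>i. d i x))"
  have uc: "\<forall>\<^sub>F n in sequentially. \<forall>x\<in>{a..b}. \<bar>Y n x - Yl x\<bar> < e" if "e > 0" for e
    using uniform_limitD[OF ul that] unfolding sumd Yl_def dist_real_def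
    by (auto elim!: eventually_mono simp: algebra_simps)
  have ptw: "(\<lambda>n. Y (Suc n) x) \<longlonglongrightarrow> Yl x" if "x \<in> {a..b}" for x
  proof -
    have "(\<lambda>n. Y n x - y0) \<longlonglongrightarrow> suminf (\<lambda>i. d i x)"
      using tendsto_uniform_limitI[OF ul that] unfolding sumd .
    then have "(\<lambda>n. Y n x - y0 + y0) \<longlonglongrightarrow> suminf (\<lambda>i. d i x) + y0"
      by (intro tendsto_intros)
    then show ?thesis unfolding Yl_def using LIMSEQ_Suc by (simp add: add.commute)
  qed
  obtain G where G: "\<forall>x\<in>{a..b}. (\<lambda>n. Y (Suc n) x) \<longlonglongrightarrow> G x \<and>
        (G has_field_derivative g x (Yl x)) (at x within {a..b})"
  proof -
    have "\<exists>G. \<forall>x\<in>{a..b}. (\<lambda>n. Y (Suc n) x) \<longlonglongrightarrow> G x \<and>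
        (G has_field_derivative g x (Yl x)) (at x within {a..b})"
    proof (rule real_derivative_sequence[where f'="\<lambda>n x. g x (Y n x)" and x=a and l=y0])
      show "convex {a..b}" by simp
      show "\<And>n x. x \<in> {a..b} \<Longrightarrow> (Y (Suc n) has_real_derivative g x (Y n x)) (at x within {a..b})"
        using der by blast
      show "a \<in> {a..b}" using ab by simp
      show "(\<lambda>n. Y (Suc n) a) \<longlonglongrightarrow> y0" by (simp add: Ya)
      fix e :: real assume e: "e > 0"
      have "e / (L+1) > 0" using e L by simp
      from uc[OF this] obtain N where N: "\<And>n x. n \<ge> N \<Longrightarrow> x \<in> {a..b} \<Longrightarrow> \<bar>Y n x - Yl x\<bar> < e / (L+1)"
        unfolding eventually_sequentially by blast
      show "\<exists>N. \<forall>n x. N \<le> n \<longrightarrow> x \<in> {a..b} \<longrightarrow> norm (g x (Y n x) - g x (Yl x)) \<le> e"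
      proof (intro exI[of _ N] allI impI)
        fix n x assume "N \<le> n" "x \<in> {a..b}"
        have "norm (g x (Y n x) - g x (Yl x)) \<le> L * \<bar>Y n x - Yl x\<bar>" using lip \<open>x \<in> {a..b}\<close> by simp
        also have "\<dots> \<le> L * (e / (L+1))" using N[OF \<open>N \<le> n\<close> \<open>x \<in> {a..b}\<close>] L
          by (intro mult_left_mono) auto
        also have "\<dots> \<le> e" using L e by (simp add: field_simps)
        finally show "norm (g x (Y n x) - g x (Yl x)) \<le> e" .
      qed
    qed
    then show ?thesis using that by blast
  qed
  have GY: "G x = Yl x" if "x \<in> {a..b}" for x using G ptw that LIMSEQ_unique by blast
  show ?thesis
  proof (intro exI conjI ballI)
    show "Yl a = y0"
    proof -
      have "(\<lambda>n. Y (Suc n) a) \<longlonglongrightarrow> Yl a" using ptw[of a] ab by simp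
      then have "(\<lambda>n. y0) \<longlonglongrightarrow> Yl a" by (simp add: Ya)
      then show ?thesis using LIMSEQ_const_iff by metis
    qed
    fix t assume t: "t \<in> {a..b}"
    have "(G has_field_derivative g t (Yl t)) (at t within {a..b})" using G t by blast
    then show "(Yl has_real_derivative g t (Yl t)) (at t within {a..b})"
      by (rule has_field_derivative_transform_within[where d=1]) (use t GY in auto)
  qed
qed



lemma dissip:
  fixes y1 y2 qq :: real
  assumes "y1 < 0" "y2 < 0" "qq \<ge> 0"
  shows "(y1 - y2) * (qq/y1 - qq/y2) \<le> 0"
proof -
  have "(y1 - y2) * (qq/y1 - qq/y2) = - (qq * (y1-y2)^2 / (y1*y2))"
    using assms by (simp add: field_simps power2_eq_square)
  moreover have "y1 * y2 > 0" using assms by (simp add: mult_neg_neg)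
  ultimately show ?thesis using assms by simp
qed

lemma recip_lip:
  fixes y1 y2 w qq Qm :: real
  assumes "y1 \<le> -w" "y2 \<le> -w" "w > 0" "0 \<le> qq" "qq \<le> Qm"
  shows "\<bar>qq/y1 - qq/y2\<bar> \<le> Qm * \<bar>y1 - y2\<bar> / w^2"
proof -
  have pr: "y1 * y2 \<ge> w^2"
  proof -
    have "w * w \<le> (- y1) * (- y2)" using assms by (intro mult_mono) auto
    then show ?thesis by (simp add: power2_eq_square)
  qed
  have ne: "y1 \<noteq> 0" "y2 \<noteq> 0" "y1 * y2 > 0" using assms pr
    by (auto simp: zero_less_mult_iff)
  have "qq/y1 - qq/y2 = qq * (y2 - y1) / (y1 * y2)" using ne by (simp add: field_simps)
  moreover have "\<bar>y1 * y2\<bar> = y1 * y2" using ne by simp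
  ultimately have "\<bar>qq/y1 - qq/y2\<bar> = qq * \<bar>y1 - y2\<bar> / (y1 * y2)" using ne assms
    by (simp add: abs_mult abs_divide abs_minus_commute)
  also have "\<dots> \<le> Qm * \<bar>y1 - y2\<bar> / w^2"
    using assms pr by (intro frac_le mult_mono) auto
  finally show ?thesis .
qed

lemma construct:
  fixes h q z :: "real \<Rightarrow> real" and c cp :: real
  assumes hc: "continuous_on {0..1} h" and qc: "continuous_on {0..1} q"
    and qpos: "\<forall>\<phi>\<in>{0<..<1}. q \<phi> > 0" and q0: "q 0 = 0" and q1: "q 1 = 0"
    and zs: "sol_P h q c z" and z1: "z 1 < 0" and ccp: "c < cp"
  shows "\<exists>u. sol_P00 h q cp u"
proof -
  have zc: "continuous_on {0..1} z" and zd: "\<And>\<phi>. \<phi> \<in> {0<..<1} \<Longrightarrow> (z has_real_derivative (h \<phi> - c - q \<phi> / z \<phi>)) (at \<phi>)"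
    and zneg: "\<And>\<phi>. \<phi> \<in> {0<..<1} \<Longrightarrow> z \<phi> < 0" and z0: "z 0 = 0"
    using zs unfolding sol_P_def by auto
  have qnn: "\<And>x. x \<in> {0..1} \<Longrightarrow> q x \<ge> 0"
    using qpos q0 q1 by (metis atLeastAtMost_iff greaterThanLessThan_iff less_eq_real_def)
  obtain C where C: "C \<ge> 0" "\<And>\<phi>. \<phi> \<in> {0..1} \<Longrightarrow> \<bar>cp - h \<phi>\<bar> \<le> C"
  proof -
    have "continuous_on {0..1} (\<lambda>\<phi>. cp - h \<phi>)" by (intro continuous_intros hc)
    from compact_imp_bounded[OF compact_continuous_image[OF this compact_Icc]]
    obtain B where "\<forall>x\<in>(\<lambda>\<phi>. cp - h \<phi>) ` {0..1}. norm x \<le> B" unfolding bounded_iff by auto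
    then show ?thesis using that[of "max B 0"] by force
  qed
  obtain Qm where Qm: "Qm \<ge> 0" "\<And>\<phi>. \<phi> \<in> {0..1} \<Longrightarrow> q \<phi> \<le> Qm"
  proof -
    from compact_imp_bounded[OF compact_continuous_image[OF qc compact_Icc]]
    obtain B where "\<forall>x\<in>q ` {0..1}. norm x \<le> B" unfolding bounded_iff by auto
    then show ?thesis using that[of "max B 0"] by force
  qed
  define a where "a = (\<lambda>n::nat. 1 / (real n + 4))"
  define b where "b = (\<lambda>n. 1 - a n)"
  have a_pos: "a n > 0" for n unfolding a_def by simp
  have a_le: "a n \<le> 1/4" for n unfolding a_def by (simp add: field_simps)
  have a_le2: "a n \<le> 1 / (real n + 1)" for n unfolding a_def by (simp add: field_simps)
  have ab: "a n < b n" "b n < 1" "a n < 1" "b n > 0" for n using a_pos[of n] a_le[of n] unfolding b_def by auto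
  have a_mono: "a m \<le> a n" if "n \<le> m" for n m unfolding a_def using that by (simp add: field_simps)
  have b_mono: "b n \<le> b m" if "n \<le> m" for n m unfolding b_def using a_mono[OF that] by simp
  have in01: "x \<in> {0<..<1}" if "x \<in> {a n..b n}" for x n using that ab[of n] a_pos[of n] by auto
  have refl01: "1 - x \<in> {a n..b n}" if "x \<in> {a n..b n}" for x n using that unfolding b_def by auto
  define \<epsilon> where "\<epsilon> = (\<lambda>n. min (1 / (real n + 1)) (- z (1 - a n) / 2))"
  have eps_pos: "\<epsilon> n > 0" for n
  proof -
    have "1 - a n \<in> {0<..<1}" using a_pos[of n] ab[of n] by auto
    then show ?thesis unfolding \<epsilon>_def using zneg by auto
  qed
  have eps_le: "\<epsilon> n \<le> 1 / (real n + 1)" "\<epsilon> n \<le> - z (1 - a n) / 2" for n unfolding \<epsilon>_def by auto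
  have "\<forall>n. \<exists>m>0. \<forall>x\<in>{a n..b n}. q x \<ge> m"
  proof
    fix n
    obtain x0 where x0: "x0 \<in> {a n..b n}" "\<forall>y\<in>{a n..b n}. q x0 \<le> q y"
      using continuous_attains_inf[of "{a n..b n}" q] ab[of n] continuous_on_subset[OF qc, of "{a n..b n}"]
        a_pos[of n] by fastforce
    have "q x0 > 0" using qpos in01[OF x0(1)] by auto
    then show "\<exists>m>0. \<forall>x\<in>{a n..b n}. q x \<ge> m" using x0(2) by (intro exI[of _ "q x0"]) auto
  qed
  then obtain mm where mm: "\<And>n. mm n > 0" "\<And>n x. x \<in> {a n..b n} \<Longrightarrow> q x \<ge> mm n"
    by metis
  define \<eta> where "\<eta> = (\<lambda>n. min (\<epsilon> n / 2) (mm n / (C+1)))"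
  have eta_pos: "\<eta> n > 0" for n unfolding \<eta>_def using eps_pos[of n] mm(1)[of n] C(1) by auto
  have eta_le: "\<eta> n \<le> \<epsilon> n / 2" "\<eta> n \<le> mm n / (C+1)" for n unfolding \<eta>_def by (rule min.cobounded1, rule min.cobounded2)
  define G where "G = (\<lambda>t y. cp - h (1 - t) + q (1 - t) / y)"
  define gn where "gn = (\<lambda>n t y. G t (min y (- \<eta> n)))"
  have ex: "\<exists>y. y (a n) = - \<epsilon> n \<and> (\<forall>t\<in>{a n..b n}. (y has_real_derivative gn n t (y t)) (at t within {a n..b n}))" for n
  proof (rule picard)
    show "a n \<le> b n" using ab[of n] by simp
    have s01: "(\<lambda>p. 1 - fst p) ` ({a n..b n} \<times> UNIV) \<subseteq> {0..1}" using ab[of n] a_pos[of n] unfolding b_def by auto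
    have "continuous_on ({a n..b n} \<times> UNIV) (\<lambda>p. h (1 - fst p))"
      by (rule continuous_on_compose2[OF hc _ s01]) (intro continuous_intros)
    moreover have "continuous_on ({a n..b n} \<times> UNIV) (\<lambda>p. q (1 - fst p))"
      by (rule continuous_on_compose2[OF qc _ s01]) (intro continuous_intros)
    ultimately show "continuous_on ({a n..b n} \<times> UNIV) (\<lambda>p. gn n (fst p) (snd p))"
      unfolding gn_def G_def using eta_pos[of n]
      by (intro continuous_intros) (auto simp: min_def)
    show "0 \<le> Qm / (\<eta> n)^2" using Qm by simp
    fix t y1 y2 assume t: "t \<in> {a n..b n}"
    define m1 where "m1 = min y1 (- \<eta> n)"
    define m2 where "m2 = min y2 (- \<eta> n)"
    have m12: "m1 \<le> - \<eta> n" "m2 \<le> - \<eta> n" "\<bar>m1 - m2\<bar> \<le> \<bar>y1 - y2\<bar>" unfolding m1_def m2_def by auto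
    have q01: "0 \<le> q (1 - t)" "q (1 - t) \<le> Qm" using qnn[of "1-t"] Qm(2)[of "1-t"] t ab[of n] a_pos[of n] unfolding b_def by auto
    have pr: "m1 * m2 \<ge> (\<eta> n)^2"
    proof -
      have "\<eta> n * \<eta> n \<le> (- m1) * (- m2)" using m12 eta_pos[of n] by (intro mult_mono) auto
      then show ?thesis by (simp add: power2_eq_square)
    qed
    have "\<bar>gn n t y1 - gn n t y2\<bar> = q (1 - t) * \<bar>m2 - m1\<bar> / (m1 * m2)"
    proof -
      have ne: "m1 \<noteq> 0" "m2 \<noteq> 0" "m1 * m2 > 0" using m12 eta_pos[of n] pr
        by (auto simp: zero_less_mult_iff)
      have "gn n t y1 - gn n t y2 = q (1 - t) * (m2 - m1) / (m1 * m2)"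
        unfolding gn_def G_def m1_def[symmetric] m2_def[symmetric] using ne by (simp add: field_simps)
      moreover have "\<bar>m1 * m2\<bar> = m1 * m2" using ne by simp
      ultimately show ?thesis using ne q01 by (simp add: abs_mult abs_divide)
    qed
    also have "\<dots> \<le> Qm * \<bar>y1 - y2\<bar> / (\<eta> n)^2"
      using q01 m12 pr eta_pos[of n] Qm(1)
      by (intro frac_le mult_mono) auto
    finally show "\<bar>gn n t y1 - gn n t y2\<bar> \<le> Qm / (\<eta> n)^2 * \<bar>y1 - y2\<bar>" by simp
  qed
  obtain Y where Ya: "\<And>n. Y n (a n) = - \<epsilon> n"
    and Yw: "\<And>n t. t \<in> {a n..b n} \<Longrightarrow> (Y n has_real_derivative gn n t (Y n t)) (at t within {a n..b n})"
  proof -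
    have "\<forall>n. \<exists>y. y (a n) = - \<epsilon> n \<and> (\<forall>t\<in>{a n..b n}. (y has_real_derivative gn n t (y t)) (at t within {a n..b n}))"
      using ex by blast
    then obtain Y where "\<forall>n. Y n (a n) = - \<epsilon> n \<and> (\<forall>t\<in>{a n..b n}. (Y n has_real_derivative gn n t (Y n t)) (at t within {a n..b n}))"
      by (rule choice[THEN exE]) blast
    then show ?thesis using that by blast
  qed
  have Ycont: "continuous_on {a n..b n} (Y n)" for n
    using Yw DERIV_continuous continuous_on_eq_continuous_within by blast
  have Yat: "(Y n has_real_derivative gn n t (Y n t)) (at t)" if "a n < t" "t < b n" for n t
    using Yw[of t n] that at_within_Icc_at[of "a n" t "b n"] by auto
  have q1t: "q (1 - x) \<ge> mm n" if "x \<in> {a n..b n}" for x n using mm(2) refl01[OF that] by blast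
  have q1t0: "q (1 - x) > 0" if "x \<in> {a n..b n}" for x n using q1t[OF that] mm(1)[of n] by linarith
  have q1tle: "q (1 - x) \<le> Qm" if "x \<in> {0..1}" for x using Qm(2)[of "1-x"] that by auto
  have h1t: "\<bar>cp - h (1 - x)\<bar> \<le> C" if "x \<in> {0..1}" for x using C(2)[of "1-x"] that by auto
  \<comment> \<open>P1: truncation inactive\<close>
  have P1: "Y n t \<le> - \<eta> n" if "t \<in> {a n..b n}" for n t
  proof -
    have "\<forall>x\<in>{a n..b n}. (\<lambda>x. - \<eta> n - Y n x) x \<ge> 0"
    proof (rule cross)
      show "a n \<le> b n" using ab[of n] by simp
      show "continuous_on {a n..b n} (\<lambda>x. - \<eta> n - Y n x)" by (intro continuous_intros Ycont)
      show "(\<lambda>x. - \<eta> n - Y n x) (a n) > 0" using Ya[of n] eta_le[of n] eps_pos[of n] by simp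
      fix x assume x: "a n < x" "x < b n" "(\<lambda>x. - \<eta> n - Y n x) x = 0"
      have xi: "x \<in> {a n..b n}" "x \<in> {0..1}" using x ab[of n] a_pos[of n] by auto
      have "Y n x = - \<eta> n" using x by simp
      then have gv: "gn n x (Y n x) = cp - h (1 - x) - q (1 - x) / \<eta> n" unfolding gn_def G_def by simp
      have "mm n / \<eta> n \<ge> C + 1" using eta_le(2)[of n] eta_pos[of n] mm(1)[of n] C(1)
        by (simp add: field_simps)
      moreover have "q (1 - x) / \<eta> n \<ge> mm n / \<eta> n" using q1t[OF xi(1)] eta_pos[of n]
        by (simp add: divide_right_mono)
      ultimately have "- gn n x (Y n x) \<ge> 1" unfolding gv using h1t[OF xi(2)] by linarith
      then show "\<exists>d>0. ((\<lambda>x. - \<eta> n - Y n x) has_real_derivative d) (at x)"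
        using Yat[OF x(1,2)] by (intro exI[of _ "- gn n x (Y n x)"]) (auto intro!: derivative_eq_intros)
    qed
    then show ?thesis using that by auto
  qed
  have Yneg: "Y n t < 0" if "t \<in> {a n..b n}" for n t using P1[OF that] eta_pos[of n] by linarith
  have gnG: "gn n t (Y n t) = G t (Y n t)" if "t \<in> {a n..b n}" for n t
    using P1[OF that] unfolding gn_def by (simp add: min_def)
  have YG: "(Y n has_real_derivative G t (Y n t)) (at t)" if "a n < t" "t < b n" for n t
    using Yat[OF that] gnG[of t n] that by simp
  have YGw: "(Y n has_real_derivative G t (Y n t)) (at t within {a n..b n})" if "t \<in> {a n..b n}" for n t
    using Yw[OF that] gnG[OF that] by simp
  have zt: "((\<lambda>t. z (1 - t)) has_real_derivative - (h (1 - t) - c - q (1 - t) / z (1 - t))) (at t)"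
    if "t \<in> {0<..<1}" for t
  proof -
    have "1 - t \<in> {0<..<1}" using that by auto
    have d1: "((\<lambda>t. 1 - t) has_real_derivative -1) (at t)" by (auto intro!: derivative_eq_intros)
    have "((\<lambda>x. z (1 - x)) has_real_derivative (h (1 - t) - c - q (1 - t) / z (1 - t)) * -1) (at t)"
      using DERIV_chain2[where g="\<lambda>t. 1 - t" and x=t, OF zd[OF \<open>1 - t \<in> {0<..<1}\<close>] d1] by simp
    then show ?thesis by simp
  qed
  have zcont: "continuous_on {a n..b n} (\<lambda>t. z (1 - t))" for n
    by (rule continuous_on_compose2[OF zc]) (use ab[of n] a_pos[of n] in \<open>auto intro!: continuous_intros simp: b_def\<close>)
  have P2: "Y n t \<ge> z (1 - t)" if "t \<in> {a n..b n}" for n t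
  proof -
    have "\<forall>x\<in>{a n..b n}. (\<lambda>x. Y n x - z (1 - x)) x \<ge> 0"
    proof (rule cross)
      show "a n \<le> b n" using ab[of n] by simp
      show "continuous_on {a n..b n} (\<lambda>x. Y n x - z (1 - x))" by (intro continuous_intros Ycont zcont)
      have "1 - a n \<in> {0<..<1}" using a_pos[of n] ab[of n] by auto
      then show "(\<lambda>x. Y n x - z (1 - x)) (a n) > 0" using Ya[of n] eps_le(2)[of n] zneg[of "1 - a n"] by simp
      fix x assume x: "a n < x" "x < b n" "(\<lambda>x. Y n x - z (1 - x)) x = 0"
      have xi: "x \<in> {0<..<1}" using x ab[of n] a_pos[of n] by auto
      have e: "Y n x = z (1 - x)" using x by simp
      show "\<exists>d>0. ((\<lambda>x. Y n x - z (1 - x)) has_real_derivative d) (at x)"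
        apply (intro exI[of _ "cp - c"] conjI)
        using ccp apply simp
        using DERIV_diff[OF YG[OF x(1,2)] zt[OF xi]] e unfolding G_def by simp
    qed
    then show ?thesis using that by auto
  qed
  have sub: "{a n..b n} \<subseteq> {a m..b m}" if "n \<le> m" for n m using a_mono[OF that] b_mono[OF that] by auto
  have P3: "\<bar>Y m t - Y n t\<bar> \<le> \<bar>Y m (a n) + \<epsilon> n\<bar>" if nm: "n \<le> m" and t: "t \<in> {a n..b n}" for n m t
  proof -
    have "(\<lambda>x. (Y m x - Y n x)^2) t \<le> (\<lambda>x. (Y m x - Y n x)^2) (a n)"
    proof (rule DERIV_nonpos_imp_decreasing_open[where f="\<lambda>x. (Y m x - Y n x)^2"])
      show "a n \<le> t" using t by simp
      show "continuous_on {a n..t} (\<lambda>x. (Y m x - Y n x)\<^sup>2)"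
      proof -
        have "continuous_on {a n..t} (Y m)" using t sub[OF nm] by (intro continuous_on_subset[OF Ycont]) auto
        moreover have "continuous_on {a n..t} (Y n)" using t by (intro continuous_on_subset[OF Ycont]) auto
        ultimately show ?thesis by (intro continuous_intros)
      qed
      fix x assume x: "a n < x" "x < t"
      have xn: "a n < x" "x < b n" "x \<in> {a n..b n}" using x t by auto
      have xm: "a m < x" "x < b m" "x \<in> {a m..b m}" using xn sub[OF nm] a_mono[OF nm] b_mono[OF nm] by auto
      have "((\<lambda>x. (Y m x - Y n x)^2) has_real_derivative
          2 * (Y m x - Y n x) * (G x (Y m x) - G x (Y n x))) (at x)"
        using YG[OF xm(1,2)] YG[OF xn(1,2)] by (auto intro!: derivative_eq_intros)
      moreover have "2 * (Y m x - Y n x) * (G x (Y m x) - G x (Y n x)) \<le> 0"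
      proof -
        have "(Y m x - Y n x) * (q (1 - x) / Y m x - q (1 - x) / Y n x) \<le> 0"
          using dissip[OF Yneg[OF xm(3)] Yneg[OF xn(3)], of "q (1 - x)"] q1t0[OF xn(3)] by simp
        moreover have "2 * (Y m x - Y n x) * (G x (Y m x) - G x (Y n x)) =
            2 * ((Y m x - Y n x) * (q (1 - x) / Y m x - q (1 - x) / Y n x))"
        proof -
          have eq: "G x (Y m x) - G x (Y n x) = q (1 - x) / Y m x - q (1 - x) / Y n x" unfolding G_def by simp
          show ?thesis by (simp only: eq mult.assoc)
        qed
        ultimately show ?thesis by linarith
      qed
      ultimately show "\<exists>y. ((\<lambda>x. (Y m x - Y n x)\<^sup>2) has_real_derivative y) (at x) \<and> y \<le> 0" by blast
    qed
    then have "(Y m t - Y n t)^2 \<le> (Y m (a n) + \<epsilon> n)^2" using Ya[of n] by simp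
    then show ?thesis using abs_le_square_iff by blast
  qed
  have P4: "\<exists>\<delta>>0. \<forall>n t. t \<in> {a n..b n} \<longrightarrow> t \<le> \<delta> \<longrightarrow> Y n t \<ge> - (\<epsilon> n + \<eta>0 + (C + 2*\<eta>0) * t)"
    if e0: "0 < \<eta>0" for \<eta>0
  proof -
    obtain d where d: "d > 0" "\<And>x. x \<in> {0..1} \<Longrightarrow> dist x 1 < d \<Longrightarrow> dist (q x) (q 1) < \<eta>0^2"
      using qc e0 unfolding continuous_on_iff by (metis atLeastAtMost_iff zero_le_one order_refl zero_less_power)
    show ?thesis
    proof (intro exI[of _ "d/2"] conjI allI impI)
      show "d/2 > 0" using d by simp
      fix n t assume t: "t \<in> {a n..b n}" "t \<le> d/2"
      have "\<forall>x\<in>{a n..t}. (\<lambda>x. Y n x + (\<epsilon> n + \<eta>0 + (C + 2*\<eta>0) * x)) x \<ge> 0"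
      proof (rule cross)
        show "a n \<le> t" using t by simp
        show "continuous_on {a n..t} (\<lambda>x. Y n x + (\<epsilon> n + \<eta>0 + (C + 2*\<eta>0) * x))"
        proof -
          have "continuous_on {a n..t} (Y n)" using t by (intro continuous_on_subset[OF Ycont]) auto
          then show ?thesis by (intro continuous_intros)
        qed
        show "(\<lambda>x. Y n x + (\<epsilon> n + \<eta>0 + (C + 2*\<eta>0) * x)) (a n) > 0"
          using Ya[of n] e0 a_pos[of n] C(1) by (simp add: add_pos_nonneg)
        fix x assume x: "a n < x" "x < t" "(\<lambda>x. Y n x + (\<epsilon> n + \<eta>0 + (C + 2*\<eta>0) * x)) x = 0"
        have xn: "a n < x" "x < b n" "x \<in> {a n..b n}" "x \<in> {0..1}" using x t ab[of n] a_pos[of n] by auto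
        define B where "B = \<epsilon> n + \<eta>0 + (C + 2*\<eta>0) * x"
        have B: "B \<ge> \<eta>0" unfolding B_def using eps_pos[of n] C(1) e0 xn a_pos[of n] by auto
        have Yx: "Y n x = - B" using x unfolding B_def by simp
        have "q (1 - x) < \<eta>0^2" using d(2)[of "1 - x"] xn t q1 x(2) q1t0[OF xn(3)] by (auto simp: dist_real_def)
        then have "q (1 - x) / B \<le> \<eta>0" using B e0 q1t0[OF xn(3)]
          by (simp add: divide_le_eq power2_eq_square) (smt (verit) mult_left_mono)
        then have "G x (Y n x) + (C + 2*\<eta>0) \<ge> \<eta>0"
          unfolding G_def Yx using h1t[OF xn(4)] by simp
        then show "\<exists>d>0. ((\<lambda>x. Y n x + (\<epsilon> n + \<eta>0 + (C + 2*\<eta>0) * x)) has_real_derivative d) (at x)"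
          using YG[OF xn(1,2)] e0 by (intro exI[of _ "G x (Y n x) + (C + 2*\<eta>0)"]) (auto intro!: derivative_eq_intros)
      qed
      then have "0 \<le> Y n t + (\<epsilon> n + \<eta>0 + (C + 2*\<eta>0) * t)" using t by auto
      then show "Y n t \<ge> - (\<epsilon> n + \<eta>0 + (C + 2*\<eta>0) * t)" by linarith
    qed
  qed
  have P5: "\<exists>w>0. \<forall>n. a n \<le> s/2 \<longrightarrow> t \<le> b n \<longrightarrow> (\<forall>x\<in>{s..t}. Y n x \<le> - w)"
    if st: "0 < s" "s < t" "t < 1" for s t
  proof -
    obtain x0 where x0: "x0 \<in> {1 - t..1 - s/2}" "\<forall>y\<in>{1 - t..1 - s/2}. q x0 \<le> q y"
      using continuous_attains_inf[of "{1 - t..1 - s/2}" q] st continuous_on_subset[OF qc, of "{1 - t..1 - s/2}"]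
      by fastforce
    define mq where "mq = q x0"
    have mq: "mq > 0" unfolding mq_def using qpos x0(1) st by auto
    have qx: "q (1 - x) \<ge> mq" if "x \<in> {s/2..t}" for x unfolding mq_def using x0(2) that by auto
    define w where "w = min (s/2) (mq / (2*(C+1)))"
    have w: "w > 0" "w \<le> s/2" "w \<le> mq / (2*(C+1))"
      unfolding w_def using st mq C(1) apply simp
      unfolding w_def by (rule min.cobounded1, rule min.cobounded2)
    have mqw: "mq / w \<ge> 2*(C+1)" using w mq C(1) by (simp add: field_simps)
    show ?thesis
    proof (intro exI[of _ "w/2"] conjI allI impI ballI)
      show "w/2 > 0" using w by simp
      fix n x assume an: "a n \<le> s/2" and bn: "t \<le> b n" and x: "x \<in> {s..t}"
      define s' where "s' = s - w"
      have s': "s/2 \<le> s'" "s' < s" "a n \<le> s'" unfolding s'_def using w an by auto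
      have stage1: "\<forall>x\<in>{s'..s}. (\<lambda>x. - (x - s') - Y n x) x \<ge> 0"
      proof (rule cross)
        show "s' \<le> s" using s' by simp
        show "continuous_on {s'..s} (\<lambda>x. - (x - s') - Y n x)"
        proof -
          have "continuous_on {s'..s} (Y n)" using s' st bn by (intro continuous_on_subset[OF Ycont]) auto
          then show ?thesis by (intro continuous_intros)
        qed
        show "(\<lambda>x. - (x - s') - Y n x) s' > 0" using Yneg[of s' n] s' st bn by auto
        fix y assume y: "s' < y" "y < s" "(\<lambda>x. - (x - s') - Y n x) y = 0"
        have yn: "a n < y" "y < b n" "y \<in> {0..1}" "y \<in> {s/2..t}" using y s' st bn ab[of n] by auto
        have Yy: "Y n y = - (y - s')" using y by simp
        have yw: "0 < y - s'" "y - s' \<le> w" using y unfolding s'_def by auto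
        have "q (1 - y) / (y - s') \<ge> mq / w"
          using qx[OF yn(4)] yw mq by (intro frac_le) auto
        then have "q (1 - y) / (y - s') \<ge> 2*(C+1)" using mqw by linarith
        moreover have "G y (Y n y) = cp - h (1 - y) - q (1 - y) / (y - s')" unfolding G_def Yy
          by (simp add: divide_minus_right[symmetric])
        moreover have "cp - h (1 - y) \<le> C" using h1t[OF yn(3)] by (simp add: abs_le_iff)
        ultimately have "-1 - G y (Y n y) \<ge> C + 1" by argo
        then show "\<exists>d>0. ((\<lambda>x. - (x - s') - Y n x) has_real_derivative d) (at y)"
          using YG[OF yn(1,2)] C(1) by (intro exI[of _ "-1 - G y (Y n y)"]) (auto intro!: derivative_eq_intros)
      qed
      have "s \<in> {s'..s}" using s' by auto
      then have "- (s - s') - Y n s \<ge> 0" using stage1 by blast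
      then have Ys: "Y n s \<le> - w" unfolding s'_def by simp
      have stage2: "\<forall>x\<in>{s..t}. (\<lambda>x. - w/2 - Y n x) x \<ge> 0"
      proof (rule cross)
        show "s \<le> t" using st by simp
        show "continuous_on {s..t} (\<lambda>x. - w/2 - Y n x)"
        proof -
          have "continuous_on {s..t} (Y n)" using s' st bn by (intro continuous_on_subset[OF Ycont]) auto
          then show ?thesis by (intro continuous_intros)
        qed
        show "(\<lambda>x. - w/2 - Y n x) s > 0" using Ys w by auto
        fix y assume y: "s < y" "y < t" "(\<lambda>x. - w/2 - Y n x) y = 0"
        have yn: "a n < y" "y < b n" "y \<in> {0..1}" "y \<in> {s/2..t}" using y s' st bn ab[of n] by auto
        have Yy: "Y n y = - (w/2)" using y by simp
        have "q (1 - y) / (w/2) \<ge> mq / (w/2)"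
          using qx[OF yn(4)] w by (intro divide_right_mono) auto
        moreover have "mq / (w/2) = 2 * (mq / w)" by simp
        ultimately have "q (1 - y) / (w/2) \<ge> 4*(C+1)" using mqw by argo
        moreover have "G y (Y n y) = cp - h (1 - y) - q (1 - y) / (w/2)" unfolding G_def Yy
          by (simp add: divide_minus_right)
        moreover have "cp - h (1 - y) \<le> C" using h1t[OF yn(3)] by (simp add: abs_le_iff)
        ultimately have "- G y (Y n y) \<ge> 1" using C(1) by argo
        then show "\<exists>d>0. ((\<lambda>x. - w/2 - Y n x) has_real_derivative d) (at y)"
          using YG[OF yn(1,2)] by (intro exI[of _ "- G y (Y n y)"]) (auto intro!: derivative_eq_intros)
      qed
      then show "Y n x \<le> - (w/2)" using x by auto
    qed
  qed
  have invN: "\<exists>N::nat. \<forall>n\<ge>N. 1 / (real n + 1) \<le> r" if "r > 0" for r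
  proof -
    obtain N :: nat where N: "1 / r < real N" using reals_Archimedean2 by blast
    show ?thesis
    proof (intro exI allI impI)
      fix n assume "N \<le> n"
      then have "1 / r < real n + 1" using N by linarith
      then show "1 / (real n + 1) \<le> r" using that by (simp add: field_simps)
    qed
  qed
  have Cau: "\<exists>N. \<forall>n m t. N \<le> n \<longrightarrow> n \<le> m \<longrightarrow> t \<in> {a n..b n} \<longrightarrow> \<bar>Y m t - Y n t\<bar> \<le> e"
    if e: "e > 0" for e
  proof -
    define \<eta>0 where "\<eta>0 = min 1 (e/4)"
    have e0: "\<eta>0 > 0" "\<eta>0 \<le> 1" "\<eta>0 \<le> e/4" unfolding \<eta>0_def using e by auto
    obtain \<delta> where \<delta>: "\<delta> > 0" "\<And>n t. t \<in> {a n..b n} \<Longrightarrow> t \<le> \<delta> \<Longrightarrow> Y n t \<ge> - (\<epsilon> n + \<eta>0 + (C + 2*\<eta>0) * t)"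
      using P4[OF e0(1)] by blast
    have "min \<delta> (e / (4*(C+4))) > 0" using \<delta> e C(1) by auto
    from invN[OF this] obtain N where N: "\<And>n. N \<le> n \<Longrightarrow> 1 / (real n + 1) \<le> min \<delta> (e / (4*(C+4)))" by blast
    show ?thesis
    proof (intro exI[of _ N] allI impI)
      fix n m t assume nm: "N \<le> n" "n \<le> m" and t: "t \<in> {a n..b n}"
      define K where "K = 1 / (real n + 1)"
      have K: "K \<le> \<delta>" "K * (C+4) \<le> e/4" "K > 0" using N[OF nm(1)] C(1) e unfolding K_def
        by (auto simp: field_simps)
      have Km: "1 / (real m + 1) \<le> K" unfolding K_def using nm(2) by (simp add: field_simps)
      have epsm: "\<epsilon> m \<le> K" using eps_le(1)[of m] Km by linarith
      have epsn: "\<epsilon> n \<le> K" using eps_le(1)[of n] unfolding K_def by linarith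
      have an: "a n \<le> K" using a_le2[of n] unfolding K_def by linarith
      have anm: "a n \<in> {a m..b m}" using sub[OF nm(2)] ab[of n] by auto
      have low: "Y m (a n) \<ge> - (\<epsilon> m + \<eta>0 + (C + 2*\<eta>0) * a n)"
        using \<delta>(2)[OF anm] an K(1) by linarith
      have neg: "Y m (a n) < 0" using Yneg[OF anm] .
      have "(C + 2*\<eta>0) * a n \<le> (C + 2) * K"
        using e0 C(1) an a_pos[of n] by (intro mult_mono) auto
      then have "\<bar>Y m (a n) + \<epsilon> n\<bar> \<le> (C + 4) * K + e/4"
        using low neg epsm epsn eps_pos[of n] eps_pos[of m] e0 K(3) by (simp add: abs_le_iff algebra_simps)
      also have "\<dots> \<le> e" using K(2) e by (simp add: algebra_simps)
      finally show "\<bar>Y m t - Y n t\<bar> \<le> e" using P3[OF nm(2) t] by linarith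
    qed
  qed
  have tin: "\<exists>N. \<forall>n\<ge>N. t \<in> {a n..b n}" if t: "t \<in> {0<..<1}" for t
  proof -
    have "min t (1 - t) > 0" using t by auto
    from invN[OF this] obtain N where N: "\<And>n. N \<le> n \<Longrightarrow> 1 / (real n + 1) \<le> min t (1 - t)" by blast
    show ?thesis
    proof (intro exI[of _ N] allI impI)
      fix n assume "N \<le> n"
      then have "a n \<le> min t (1 - t)" using N a_le2[of n] by fastforce
      then show "t \<in> {a n..b n}" unfolding b_def by auto
    qed
  qed
  define Yl where "Yl = (\<lambda>t. lim (\<lambda>n. Y n t))"
  have conv: "(\<lambda>n. Y n t) \<longlonglongrightarrow> Yl t" if t: "t \<in> {0<..<1}" for t
  proof -
    have "Cauchy (\<lambda>n. Y n t)"
    proof (rule CauchyI)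
      fix e :: real assume e: "e > 0"
      obtain N1 where N1: "\<And>n m t. N1 \<le> n \<Longrightarrow> n \<le> m \<Longrightarrow> t \<in> {a n..b n} \<Longrightarrow> \<bar>Y m t - Y n t\<bar> \<le> e/2"
        using Cau[of "e/2"] e by auto
      obtain N2 where N2: "\<And>n. N2 \<le> n \<Longrightarrow> t \<in> {a n..b n}" using tin[OF t] by blast
      show "\<exists>M. \<forall>m\<ge>M. \<forall>n\<ge>M. norm (Y m t - Y n t) < e"
      proof (intro exI[of _ "max N1 N2"] allI impI)
        fix m n assume mn: "max N1 N2 \<le> m" "max N1 N2 \<le> n"
        show "norm (Y m t - Y n t) < e"
        proof (cases "n \<le> m")
          case True
          then show ?thesis using N1[of n m t] N2[of n] mn e by auto
        next
          case False
          then show ?thesis using N1[of m n t] N2[of m] mn e by (auto simp: abs_minus_commute)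
        qed
      qed
    qed
    then show ?thesis unfolding Yl_def using Cauchy_convergent_iff convergent_LIMSEQ_iff by blast
  qed
  have unif: "\<exists>N. \<forall>n t. N \<le> n \<longrightarrow> t \<in> {a n..b n} \<longrightarrow> \<bar>Yl t - Y n t\<bar> \<le> e" if e: "e > 0" for e
  proof -
    obtain N where N: "\<And>n m t. N \<le> n \<Longrightarrow> n \<le> m \<Longrightarrow> t \<in> {a n..b n} \<Longrightarrow> \<bar>Y m t - Y n t\<bar> \<le> e"
      using Cau[OF e] by auto
    show ?thesis
    proof (intro exI[of _ N] allI impI)
      fix n t assume n: "N \<le> n" and t: "t \<in> {a n..b n}"
      have "(\<lambda>m. \<bar>Y m t - Y n t\<bar>) \<longlonglongrightarrow> \<bar>Yl t - Y n t\<bar>"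
        using conv[OF in01[OF t]] by (intro tendsto_intros)
      moreover have "\<exists>M. \<forall>m\<ge>M. \<bar>Y m t - Y n t\<bar> \<le> e" using N[OF n _ t] by blast
      ultimately show "\<bar>Yl t - Y n t\<bar> \<le> e" by (rule LIMSEQ_le_const2)
    qed
  qed
  have Lz: "Yl t \<ge> z (1 - t)" and Lneg: "Yl t \<le> 0" if t: "t \<in> {0<..<1}" for t
  proof -
    obtain N where N: "\<And>n. N \<le> n \<Longrightarrow> t \<in> {a n..b n}" using tin[OF t] by blast
    show "Yl t \<ge> z (1 - t)" using conv[OF t] by (rule LIMSEQ_le_const) (use N P2 in blast)
    show "Yl t \<le> 0" using conv[OF t] by (rule LIMSEQ_le_const2) (use N Yneg less_imp_le in blast)
  qed
  have LP4: "\<exists>\<delta>>0. \<forall>t\<in>{0<..<1}. t \<le> \<delta> \<longrightarrow> Yl t \<ge> - (2*\<eta>0 + (C + 2*\<eta>0) * t)" if e0: "\<eta>0 > 0" for \<eta>0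
  proof -
    obtain \<delta> where \<delta>: "\<delta> > 0" "\<And>n t. t \<in> {a n..b n} \<Longrightarrow> t \<le> \<delta> \<Longrightarrow> Y n t \<ge> - (\<epsilon> n + \<eta>0 + (C + 2*\<eta>0) * t)"
      using P4[OF e0] by blast
    show ?thesis
    proof (intro exI[of _ \<delta>] conjI ballI impI)
      show "\<delta> > 0" by fact
      fix t assume t: "t \<in> {0<..<1}" "t \<le> \<delta>"
      obtain N1 where N1: "\<And>n. N1 \<le> n \<Longrightarrow> t \<in> {a n..b n}" using tin[OF t(1)] by blast
      obtain N2 where N2: "\<And>n. N2 \<le> n \<Longrightarrow> 1 / (real n + 1) \<le> \<eta>0" using invN[OF e0] by blast
      have "\<forall>n\<ge>max N1 N2. - (2*\<eta>0 + (C + 2*\<eta>0) * t) \<le> Y n t"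
      proof (intro allI impI)
        fix n assume "max N1 N2 \<le> n"
        then have "\<epsilon> n \<le> \<eta>0" "t \<in> {a n..b n}" using N1 N2 eps_le(1)[of n] by force+
        then show "- (2*\<eta>0 + (C + 2*\<eta>0) * t) \<le> Y n t" using \<delta>(2)[of t n] t by linarith
      qed
      then show "Yl t \<ge> - (2*\<eta>0 + (C + 2*\<eta>0) * t)" using conv[OF t(1)] by (intro LIMSEQ_le_const) blast+
    qed
  qed
  have LP5: "\<exists>w>0. \<forall>x\<in>{s..t}. Yl x \<le> - w \<and> (\<forall>n. a n \<le> s/2 \<longrightarrow> t \<le> b n \<longrightarrow> Y n x \<le> - w)"
    if st: "0 < s" "s < t" "t < 1" for s t
  proof -
    obtain w where w: "w > 0" "\<And>n x. a n \<le> s/2 \<Longrightarrow> t \<le> b n \<Longrightarrow> x \<in> {s..t} \<Longrightarrow> Y n x \<le> - w"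
      using P5[OF st] by blast
    have "min (s/2) (1 - t) > 0" using st by auto
    from invN[OF this] obtain N where N: "\<And>n. N \<le> n \<Longrightarrow> 1 / (real n + 1) \<le> min (s/2) (1 - t)" by blast
    have aN: "a n \<le> s/2" "t \<le> b n" if "N \<le> n" for n using N[OF that] a_le2[of n] unfolding b_def by auto
    show ?thesis
    proof (intro exI[of _ w] conjI ballI allI impI)
      show "w > 0" by fact
      fix x assume x: "x \<in> {s..t}"
      then have "x \<in> {0<..<1}" using st by auto
      show "Yl x \<le> - w" using conv[OF \<open>x \<in> {0<..<1}\<close>] by (rule LIMSEQ_le_const2) (use aN w(2) x in blast)
      fix n assume "a n \<le> s/2" "t \<le> b n" then show "Y n x \<le> - w" using w(2) x by blast
    qed
  qed
  have Yld: "(Yl has_real_derivative G \<tau> (Yl \<tau>)) (at \<tau>)" if \<tau>: "\<tau> \<in> {0<..<1}" for \<tau>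
  proof -
    define s where "s = \<tau>/2"
    define t where "t = (1 + \<tau>)/2"
    have st: "0 < s" "s < \<tau>" "\<tau> < t" "t < 1" using \<tau> unfolding s_def t_def by auto
    obtain w where w: "w > 0" "\<And>x. x \<in> {s..t} \<Longrightarrow> Yl x \<le> - w"
      "\<And>x n. x \<in> {s..t} \<Longrightarrow> a n \<le> s/2 \<Longrightarrow> t \<le> b n \<Longrightarrow> Y n x \<le> - w"
      using LP5[of s t] st by auto
    have "min (s/2) (1 - t) > 0" using st by auto
    from invN[OF this] obtain N0 where N0: "\<And>n. N0 \<le> n \<Longrightarrow> 1 / (real n + 1) \<le> min (s/2) (1 - t)" by blast
    have aN: "a n \<le> s/2" "t \<le> b n" "{s..t} \<subseteq> {a n..b n}" if "N0 \<le> n" for n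
      using N0[OF that] a_le2[of n] st unfolding b_def by auto
    have "\<exists>g. \<forall>x\<in>{s..t}. (\<lambda>k. Y (k + N0) x) \<longlonglongrightarrow> g x \<and> (g has_field_derivative G x (Yl x)) (at x within {s..t})"
    proof (rule real_derivative_sequence[where f'="\<lambda>k x. G x (Y (k + N0) x)" and x=s and l="Yl s"])
      show "convex {s..t}" by simp
      show "s \<in> {s..t}" using st by simp
      show "(\<lambda>k. Y (k + N0) s) \<longlonglongrightarrow> Yl s"
        using LIMSEQ_ignore_initial_segment[OF conv[of s], of N0] st by simp
      fix k x assume x: "x \<in> {s..t}"
      have "x \<in> {a (k + N0)..b (k + N0)}" using aN[of "k + N0"] x by auto
      from YGw[OF this] show "(Y (k + N0) has_real_derivative G x (Y (k + N0) x)) (at x within {s..t})"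
        by (rule DERIV_subset) (use aN[of "k + N0"] in auto)
    next
      fix e :: real assume e: "e > 0"
      obtain N1 where N1: "\<And>n t. N1 \<le> n \<Longrightarrow> t \<in> {a n..b n} \<Longrightarrow> \<bar>Yl t - Y n t\<bar> \<le> e * w^2 / (Qm + 1)"
        using unif[of "e * w^2 / (Qm + 1)"] e w(1) Qm(1) by auto
      show "\<exists>N. \<forall>n x. N \<le> n \<longrightarrow> x \<in> {s..t} \<longrightarrow> norm (G x (Y (n + N0) x) - G x (Yl x)) \<le> e"
      proof (intro exI[of _ N1] allI impI)
        fix n x assume n: "N1 \<le> n" and x: "x \<in> {s..t}"
        have xin: "x \<in> {a (n + N0)..b (n + N0)}" using aN[of "n + N0"] x by auto
        have x01: "x \<in> {0..1}" using x st by auto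
        have "norm (G x (Y (n + N0) x) - G x (Yl x)) = \<bar>q (1 - x) / Y (n + N0) x - q (1 - x) / Yl x\<bar>"
          unfolding G_def by simp
        also have "\<dots> \<le> Qm * \<bar>Y (n + N0) x - Yl x\<bar> / w^2"
          using w(1) w(2)[OF x] w(3)[OF x aN(1,2)[of "n + N0"]] q1t0[OF xin] q1tle[OF x01]
          by (intro recip_lip) auto
        also have "\<dots> \<le> e"
        proof -
          define dd where "dd = \<bar>Y (n + N0) x - Yl x\<bar>"
          have dd: "dd \<le> e * w^2 / (Qm + 1)" "dd \<ge> 0"
            using N1[of "n + N0" x] n xin unfolding dd_def by (auto simp: abs_minus_commute)
          have "Qm * dd \<le> (Qm + 1) * dd" using dd(2) by (simp add: algebra_simps)
          also have "\<dots> \<le> (Qm + 1) * (e * w^2 / (Qm + 1))" using dd Qm(1) by (intro mult_left_mono) auto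
          also have "\<dots> = e * w^2" using Qm(1) by simp
          finally have "Qm * dd \<le> e * w^2" .
          then show ?thesis unfolding dd_def[symmetric] using w(1) by (simp add: pos_divide_le_eq)
        qed
        finally show "norm (G x (Y (n + N0) x) - G x (Yl x)) \<le> e" .
      qed
    qed
    then obtain g where g: "\<And>x. x \<in> {s..t} \<Longrightarrow> (\<lambda>k. Y (k + N0) x) \<longlonglongrightarrow> g x"
      "\<And>x. x \<in> {s..t} \<Longrightarrow> (g has_field_derivative G x (Yl x)) (at x within {s..t})" by blast
    have gY: "g x = Yl x" if "x \<in> {s..t}" for x
    proof -
      have "x \<in> {0<..<1}" using that st by auto
      from LIMSEQ_ignore_initial_segment[OF conv[OF this], of N0] g(1)[OF that]
      show ?thesis using LIMSEQ_unique by auto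
    qed
    have "(g has_field_derivative G \<tau> (Yl \<tau>)) (at \<tau>)"
      using g(2)[of \<tau>] st at_within_Icc_at[of s \<tau> t] by auto
    then show ?thesis
      by (rule has_field_derivative_transform_within_open[where S="{s<..<t}"]) (use st gY in auto)
  qed
  have Yl_neg: "Yl \<tau> < 0" if \<tau>: "\<tau> \<in> {0<..<1}" for \<tau>
  proof -
    obtain w where "w > 0" "\<forall>x\<in>{\<tau>/2..(1+\<tau>)/2}. Yl x \<le> - w"
      using LP5[of "\<tau>/2" "(1+\<tau>)/2"] \<tau> by auto
    moreover have "\<tau> \<in> {\<tau>/2..(1+\<tau>)/2}" using \<tau> by auto
    ultimately have "Yl \<tau> \<le> - w" by blast
    then show ?thesis using \<open>w > 0\<close> by linarith
  qed
  define u where "u = (\<lambda>\<phi>. if \<phi> \<in> {0<..<1} then Yl (1 - \<phi>) else 0)"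
  have u0: "u 0 = 0" and u1: "u 1 = 0" unfolding u_def by auto
  have uneg: "u \<phi> < 0" if "\<phi> \<in> {0<..<1}" for \<phi>
    using Yl_neg[of "1 - \<phi>"] that unfolding u_def by auto
  have ud: "(u has_real_derivative h \<phi> - cp - q \<phi> / u \<phi>) (at \<phi>)" if \<phi>: "\<phi> \<in> {0<..<1}" for \<phi>
  proof -
    have p1: "1 - \<phi> \<in> {0<..<1}" using \<phi> by auto
    have d1: "((\<lambda>t. 1 - t) has_real_derivative -1) (at \<phi>)" by (auto intro!: derivative_eq_intros)
    have "((\<lambda>x. Yl (1 - x)) has_real_derivative G (1 - \<phi>) (Yl (1 - \<phi>)) * -1) (at \<phi>)"
      using DERIV_chain2[where g="\<lambda>t. 1 - t" and x=\<phi>, OF Yld[OF p1] d1] by simp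
    moreover have "G (1 - \<phi>) (Yl (1 - \<phi>)) * -1 = h \<phi> - cp - q \<phi> / u \<phi>"
      unfolding G_def u_def using \<phi> by simp
    ultimately have "((\<lambda>x. Yl (1 - x)) has_real_derivative h \<phi> - cp - q \<phi> / u \<phi>) (at \<phi>)" by simp
    then show ?thesis
      by (rule has_field_derivative_transform_within_open[where S="{0<..<1}"]) (use \<phi> in \<open>auto simp: u_def\<close>)
  qed
  have ucont: "continuous_on {0..1} u"
    unfolding continuous_on_eq_continuous_within
  proof
    fix x :: real assume x: "x \<in> {0..1}"
    have "x = 0 \<or> x = 1 \<or> x \<in> {0<..<1}" using x by (smt (verit) atLeastAtMost_iff greaterThanLessThan_iff)
    then consider "x = 0" | "x = 1" | "x \<in> {0<..<1}" by blast
    then show "continuous (at x within {0..1}) u"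
    proof cases
      case 3
      then show ?thesis using ud[OF 3] DERIV_isCont continuous_at_imp_continuous_within by blast
    next
      case 1
      have "(z \<longlongrightarrow> z 0) (at 0 within {0..1})"
        using zc unfolding continuous_on_def by auto
      then have zl: "(z \<longlongrightarrow> 0) (at 0 within {0..1})" using z0 by simp
      have ev: "\<forall>\<^sub>F \<phi> in at 0 within {0..1}. z \<phi> \<le> u \<phi> \<and> u \<phi> \<le> 0"
        unfolding eventually_at_filter
      proof (intro always_eventually allI impI)
        fix \<phi> :: real assume "\<phi> \<noteq> 0" "\<phi> \<in> {0..1}"
        then have "\<phi> = 1 \<or> \<phi> \<in> {0<..<1}" by (smt (verit) atLeastAtMost_iff greaterThanLessThan_iff)
        then consider "\<phi> = 1" | "\<phi> \<in> {0<..<1}" by blast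
        then show "z \<phi> \<le> u \<phi> \<and> u \<phi> \<le> 0"
        proof cases
          case 1 then show ?thesis using z1 u1 by simp
        next
          case 2
          then have "1 - \<phi> \<in> {0<..<1}" by auto
          then show ?thesis using Lz[of "1 - \<phi>"] Lneg[of "1 - \<phi>"] 2 unfolding u_def by auto
        qed
      qed
      have "(u \<longlongrightarrow> 0) (at 0 within {0..1})"
        by (rule tendsto_sandwich[OF _ _ zl tendsto_const]) (use ev in \<open>auto elim: eventually_mono\<close>)
      then show ?thesis unfolding 1 continuous_within using u0 by simp
    next
      case 2
      have "(u \<longlongrightarrow> 0) (at 1 within {0..1})"
      proof (rule tendstoI)
        fix e :: real assume e: "e > 0"
        define \<eta>0 where "\<eta>0 = e / 8"
        have e0: "\<eta>0 > 0" unfolding \<eta>0_def using e by simp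
        obtain \<delta> where \<delta>: "\<delta> > 0" "\<And>t. t \<in> {0<..<1} \<Longrightarrow> t \<le> \<delta> \<Longrightarrow> Yl t \<ge> - (2*\<eta>0 + (C + 2*\<eta>0) * t)"
          using LP4[OF e0] by blast
        define d where "d = min (min \<delta> (1/2)) (e / (2 * (C + 2*\<eta>0 + 1)))"
        have d: "d > 0" "d \<le> \<delta>" "d \<le> 1/2" "d * (C + 2*\<eta>0 + 1) \<le> e/2"
        proof -
          have P: "C + 2*\<eta>0 + 1 > 0" using e0 C(1) by simp
          show "d > 0" unfolding d_def using \<delta>(1) e P by simp
          have "d \<le> min \<delta> (1/2)" unfolding d_def by (rule min.cobounded1)
          then show "d \<le> \<delta>" "d \<le> 1/2" by auto
          have "d \<le> e / (2 * (C + 2*\<eta>0 + 1))" unfolding d_def by (rule min.cobounded2)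
          then show "d * (C + 2*\<eta>0 + 1) \<le> e/2" using P by (simp add: field_simps)
        qed
        show "\<forall>\<^sub>F \<phi> in at 1 within {0..1}. dist (u \<phi>) 0 < e"
          unfolding eventually_at
        proof (intro exI[of _ d] conjI ballI impI)
          show "d > 0" by fact
          fix \<phi> :: real assume \<phi>: "\<phi> \<in> {0..1}" "\<phi> \<noteq> 1 \<and> dist \<phi> 1 < d"
          define t where "t = 1 - \<phi>"
          have t: "t \<in> {0<..<1}" "t < d" "\<phi> \<in> {0<..<1}" using \<phi> d unfolding t_def dist_real_def by auto
          have uv: "u \<phi> = Yl t" unfolding u_def t_def using t by simp
          have lo: "Yl t \<ge> - (2*\<eta>0 + (C + 2*\<eta>0) * t)" using \<delta>(2)[OF t(1)] t d by linarith
          have "(C + 2*\<eta>0) * t \<le> (C + 2*\<eta>0 + 1) * d" using t e0 C(1) by (intro mult_mono) auto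
          then have "(C + 2*\<eta>0) * t \<le> e/2" using d(4) by (simp add: algebra_simps)
          then show "dist (u \<phi>) 0 < e" unfolding uv dist_real_def
            using lo Lneg[OF t(1)] e unfolding \<eta>0_def by (simp add: abs_le_iff)
        qed
      qed
      then show ?thesis unfolding 2 continuous_within using u1 by simp
    qed
  qed
  have C1: "C1_on {0<..<1} u" unfolding C1_on_def
  proof (rule exI[of _ "\<lambda>\<phi>. h \<phi> - cp - q \<phi> / u \<phi>"], intro conjI ballI)
    show "continuous_on {0<..<1} (\<lambda>\<phi>. h \<phi> - cp - q \<phi> / u \<phi>)"
    proof -
      have "continuous_on {0<..<1} h" "continuous_on {0<..<1} q" "continuous_on {0<..<1} u"
        by (rule continuous_on_subset[OF hc], force, rule continuous_on_subset[OF qc], force,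
            rule continuous_on_subset[OF ucont], force)
      moreover have "\<forall>x\<in>{0<..<1}. u x \<noteq> 0" using uneg by (metis less_irrefl)
      ultimately show ?thesis by (intro continuous_intros) auto
    qed
    fix \<phi> :: real assume \<phi>: "\<phi> \<in> {0<..<1}"
    show "(u has_real_derivative h \<phi> - cp - q \<phi> / u \<phi>) (at \<phi>)" using ud[OF \<phi>] .
  qed
  show ?thesis
    unfolding sol_P00_def sol_P_def using C1 ucont u0 u1 ud uneg by blast
qed

theorem proposition6p3:
  fixes f h q :: "real \<Rightarrow> real" and cstar :: real
  assumes f_deriv: "\<forall>x\<in>{0..1}. (f has_real_derivative h x) (at x within {0..1})"
    and h_cont: "continuous_on {0..1} h"
    and f0: "f 0 = 0"
    and q: "cond_q q"
    and cstar: "\<forall>c. (\<exists>z. sol_P00 h q c z) \<longleftrightarrow> c \<ge> cstar"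
  shows "\<forall>c < cstar. \<not> (\<exists>z. sol_P h q c z)"
proof (intro allI impI notI)
  fix c assume cc: "c < cstar" and "\<exists>z. sol_P h q c z"
  then obtain z where zs: "sol_P h q c z" by blast
  have qc: "continuous_on {0..1} q" and qpos: "\<forall>\<phi>\<in>{0<..<1}. q \<phi> > 0" and q0: "q 0 = 0" and q1: "q 1 = 0"
    using q unfolding cond_q_def by auto
  have zc: "continuous_on {0..1} z" and zneg: "\<And>\<phi>. \<phi> \<in> {0<..<1} \<Longrightarrow> z \<phi> < 0"
    using zs unfolding sol_P_def by auto
  have z1: "z 1 \<le> 0"
  proof (rule ccontr)
    assume "\<not> z 1 \<le> 0"
    then have pos: "z 1 > 0" by simp
    have "(z \<longlongrightarrow> z 1) (at 1 within {0..1})" using zc unfolding continuous_on_def by auto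
    then have "\<forall>\<^sub>F \<phi> in at 1 within {0..1}. z \<phi> > 0" using pos by (rule order_tendstoD)
    then obtain d where d: "d > 0" "\<And>\<phi>. \<phi> \<in> {0..1} \<Longrightarrow> \<phi> \<noteq> 1 \<Longrightarrow> dist \<phi> 1 < d \<Longrightarrow> z \<phi> > 0"
      unfolding eventually_at by blast
    define \<phi> where "\<phi> = 1 - min (d/2) (1/2)"
    have "\<phi> \<in> {0<..<1}" "\<phi> \<in> {0..1}" "\<phi> \<noteq> 1" "dist \<phi> 1 < d"
      unfolding \<phi>_def dist_real_def using d(1) by (auto simp: min_def)
    then show False using d(2)[of \<phi>] zneg[of \<phi>] by linarith
  qed
  show False
  proof (cases "z 1 = 0")
    case True
    then have "sol_P00 h q c z" using zs unfolding sol_P00_def by simp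
    then have "c \<ge> cstar" using cstar by blast
    then show False using cc by linarith
  next
    case False
    then have "z 1 < 0" using z1 by simp
    have "c < (c + cstar)/2" using cc by simp
    from construct[OF h_cont qc qpos q0 q1 zs \<open>z 1 < 0\<close> this]
    have "\<exists>u. sol_P00 h q ((c + cstar)/2) u" .
    then have "(c + cstar)/2 \<ge> cstar" using cstar by blast
    then show False using cc by argo
  qed
qed

end
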